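(* Let $n$ be even. Then there is no nondegenerate $n$-dimensional simplex $S$ with $\mathrm{ver}(S)\subset\mathrm{ver}(Q_n)$ and $S\subset Q_n\subset nS$.
   Context: $Q_n=[0,1]^n$; $\mathrm{ver}(\cdot)$ is the vertex set. $nS$ denotes the image of $S$ under the homothety with center at the center of gravity of $S$ and ratio $n$. *)

theory Defs
  imports "HOL-Analysis.Analysis"
begin

text \<open>The unit cube Q_n = [0,1]^n in R^n (dimension n = CARD('n)).\<close>
definition unit_cube :: "(real^'n) set" where
  "unit_cube = cbox 0 1"

definition cube_vertices :: "(real^'n) set" where
  "cube_vertices = {x. \<forall>i. x $ i = 0 \<or> x $ i = 1}"

definition nondeg_simplex_vertices :: "(real^'n) set \<Rightarrow> bool" where
  "nondeg_simplex_vertices V \<longleftrightarrow>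
     finite V \<and> card V = CARD('n) + 1 \<and> \<not> affine_dependent V"

text \<open>Center of gravity of the simplex conv V (equals the average of its vertices).\<close>
definition simplex_centroid :: "(real^'n) set \<Rightarrow> real^'n" where
  "simplex_centroid V = (1 / real (card V)) *\<^sub>R (\<Sum>v\<in>V. v)"

definition homothetic_image :: "real^'n \<Rightarrow> real \<Rightarrow> (real^'n) set \<Rightarrow> (real^'n) set" where
  "homothetic_image c t S = (\<lambda>x. c + t *\<^sub>R (x - c)) ` S"

end

theory Submission
  imports Defs
begin

lemma bary_unique:
  fixes V :: "'a::real_vector set"
  assumes "finite V" "\<not> affine_dependent V" "sum a V = 1" "sum b V = 1"
    "(\<Sum>k\<in>V. a k *\<^sub>R k) = (\<Sum>k\<in>V. b k *\<^sub>R k)" "k \<in> V"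
  shows "a k = b k"
proof (rule ccontr)
  assume ne: "a k \<noteq> b k"
  have "sum (\<lambda>v. a v - b v) V = 0" using assms by (simp add: sum_subtractf)
  moreover have "(\<Sum>v\<in>V. (a v - b v) *\<^sub>R v) = 0"
    using assms(5) by (simp add: scaleR_diff_left sum_subtractf)
  ultimately have "affine_dependent V"
    using affine_dependent_explicit_finite[OF assms(1)] ne assms(6)
    by (intro iffD2[OF affine_dependent_explicit_finite[OF assms(1)]]) (rule exI[of _ "\<lambda>v. a v - b v"], auto)
  with assms(2) show False by simp
qed

lemma sum_01_real:
  fixes f :: "'b \<Rightarrow> real"
  assumes "finite A" "\<forall>x\<in>A. f x = 0 \<or> f x = 1"
  shows "sum f A = real (card {x\<in>A. f x = 1})"
proof -
  have "sum f A = sum (\<lambda>x. if f x = 1 then 1 else 0) A"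
    using assms(2) by (intro sum.cong) auto
  also have "\<dots> = real (card {x\<in>A. f x = 1})"
    using assms(1) by (simp add: sum.If_cases Int_def)
  finally show ?thesis .
qed

lemma grp_aux: fixes u :: "'a::ab_group_add"
  shows "u + a = b + (p + q) \<Longrightarrow> a + B = b \<Longrightarrow> u = p + (q + B)"
  by (metis add.assoc add.commute add_diff_cancel_right')

theorem mainTheorem3:
  fixes V :: "(real^'n) set"
  assumes "even CARD('n)"
  shows "\<not> (nondeg_simplex_vertices V \<and> V \<subseteq> cube_vertices \<and>
             convex hull V \<subseteq> unit_cube \<and>
             unit_cube \<subseteq> homothetic_image (simplex_centroid V) (real CARD('n)) (convex hull V))"
proof
  assume H: "nondeg_simplex_vertices V \<and> V \<subseteq> cube_vertices \<and>
             convex hull V \<subseteq> unit_cube \<and>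
             unit_cube \<subseteq> homothetic_image (simplex_centroid V) (real CARD('n)) (convex hull V)"
  define N where "N = real CARD('n)"
  define c where "c = simplex_centroid V"
  have fin: "finite V" and cardV: "card V = CARD('n) + 1" and ind: "\<not> affine_dependent V"
    using H unfolding nondeg_simplex_vertices_def by auto
  have Vc: "V \<subseteq> cube_vertices" using H by blast
  have hom: "unit_cube \<subseteq> (\<lambda>x. c + N *\<^sub>R (x - c)) ` (convex hull V)"
    using H unfolding homothetic_image_def c_def N_def by blast
  have cardR: "real (card V) = N + 1" using cardV N_def by simp
  have Npos: "N \<ge> 0" unfolding N_def by simp
  have c_eq: "c = (\<Sum>k\<in>V. (1 / (N+1)) *\<^sub>R k)"
    unfolding c_def simplex_centroid_def cardR by (simp add: scaleR_sum_right)
  define u :: "real^'n" where "u = (\<chi> i. 1/2)"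
  have key: "\<exists>w. sum w V = 1 \<and> (\<Sum>k\<in>V. w k *\<^sub>R k) = u \<and> w v \<ge> 1 / (N+1)" if vV: "v \<in> V" for v
  proof -
    have "v \<in> cube_vertices" using Vc vV by blast
    hence v01: "\<forall>i. v $ i = 0 \<or> v $ i = 1" unfolding cube_vertices_def by simp
    have "2 *\<^sub>R u - v \<in> unit_cube"
      unfolding unit_cube_def mem_box_cart u_def using v01
      by (auto simp: vector_def) (metis order.refl zero_le_one)+
    with hom obtain y where y: "y \<in> convex hull V" and yeq: "2 *\<^sub>R u - v = c + N *\<^sub>R (y - c)"
      by blast
    obtain \<mu> where mu0: "\<forall>x\<in>V. 0 \<le> \<mu> x" and mu1: "sum \<mu> V = 1" and
      muy: "(\<Sum>x\<in>V. \<mu> x *\<^sub>R x) = y"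
      using y unfolding convex_hull_finite[OF fin] by blast
    define w where "w k = (1/2) * (if k = v then 1 else 0) + ((1 - N)/2) * (1/(N+1)) + (N/2) * \<mu> k" for k
    have ueq: "u = (1/2) *\<^sub>R v + ((1-N)/2) *\<^sub>R c + (N/2) *\<^sub>R y"
    proof -
      have "2 *\<^sub>R u = v + c + N *\<^sub>R (y - c)" using yeq by (simp add: algebra_simps)
      hence "u = (1/2) *\<^sub>R (v + c + N *\<^sub>R (y - c))"
        by (metis (no_types, lifting) scaleR_left_commute scaleR_one divide_self_if
            zero_neq_numeral divide_inverse_commute scaleR_scaleR times_divide_eq_left)
      hence h1: "u + (N/2) *\<^sub>R c = (1/2) *\<^sub>R c + ((1/2) *\<^sub>R v + (N/2) *\<^sub>R y)"
        by (simp add: algebra_simps)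
      have h2: "(N/2) *\<^sub>R c + ((1-N)/2) *\<^sub>R c = (1/2) *\<^sub>R c"
        by (simp add: scaleR_add_left[symmetric] add_divide_distrib[symmetric])
      show ?thesis using grp_aux[OF h1 h2] by (simp add: add.assoc)
    qed
    have vs: "v = (\<Sum>k\<in>V. (if k = v then 1 else 0) *\<^sub>R k)"
    proof -
      have "(\<Sum>k\<in>V. (if k = v then 1 else 0) *\<^sub>R k) = (\<Sum>k\<in>V. if k = v then k else 0)"
        by (rule sum.cong) auto
      thus ?thesis using fin vV by simp
    qed
    have "(\<Sum>k\<in>V. w k *\<^sub>R k) = (1/2) *\<^sub>R (\<Sum>k\<in>V. (if k = v then 1 else 0) *\<^sub>R k)
         + ((1-N)/2) *\<^sub>R (\<Sum>k\<in>V. (1 / (N+1)) *\<^sub>R k) + (N/2) *\<^sub>R (\<Sum>k\<in>V. \<mu> k *\<^sub>R k)"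
      unfolding w_def by (simp add: scaleR_add_left sum.distrib scaleR_sum_right)
    also have "\<dots> = u" using ueq vs c_eq muy by simp
    finally have ws: "(\<Sum>k\<in>V. w k *\<^sub>R k) = u" .
    have "sum w V = (1/2) * sum (\<lambda>k. if k = v then 1 else 0) V + ((1-N)/2) * (1/(N+1)) * card V
          + (N/2) * sum \<mu> V"
      unfolding w_def by (simp add: sum.distrib sum_distrib_left)
    also have "\<dots> = 1" using fin vV cardR mu1 Npos by (simp add: field_simps)
    finally have w1: "sum w V = 1" .
    have "w v \<ge> 1/(N+1)"
    proof -
      have "(N/2) * \<mu> v \<ge> 0" using mu0 vV Npos by simp
      moreover have "1/2 + ((1-N)/2) * (1/(N+1)) = 1/(N+1)" using Npos by (simp add: field_simps)
      ultimately show ?thesis unfolding w_def by simp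
    qed
    with w1 ws show ?thesis by blast
  qed
  have Vne: "V \<noteq> {}" using cardV by auto
  then obtain v0 where v0: "v0 \<in> V" by blast
  obtain \<beta> where b1: "sum \<beta> V = 1" and bs: "(\<Sum>k\<in>V. \<beta> k *\<^sub>R k) = u"
    using key[OF v0] by blast
  have bge: "\<beta> v \<ge> 1/(N+1)" if vV: "v \<in> V" for v
  proof -
    obtain w where w1: "sum w V = 1" and ws: "(\<Sum>k\<in>V. w k *\<^sub>R k) = u" and wv: "w v \<ge> 1/(N+1)"
      using key[OF vV] by blast
    have e: "(\<Sum>k\<in>V. \<beta> k *\<^sub>R k) = (\<Sum>k\<in>V. w k *\<^sub>R k)" using bs ws by simp
    have "\<beta> v = w v" by (rule bary_unique[OF fin ind b1 w1 e vV])
    with wv show ?thesis by simp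
  qed
  have "sum (\<lambda>v. \<beta> v - 1/(N+1)) V = sum \<beta> V - real (card V) * (1/(N+1))"
    by (simp add: sum_subtractf)
  also have "\<dots> = 0" using b1 cardR Npos by simp
  finally have s0: "sum (\<lambda>v. \<beta> v - 1/(N+1)) V = 0" .
  have nn: "\<And>v. v \<in> V \<Longrightarrow> 0 \<le> \<beta> v - 1/(N+1)" using bge by simp
  have "\<forall>v\<in>V. \<beta> v - 1/(N+1) = 0"
    using iffD1[OF sum_nonneg_eq_0_iff[OF fin nn] s0] by blast
  hence "(\<Sum>k\<in>V. \<beta> k *\<^sub>R k) = (\<Sum>k\<in>V. (1/(N+1)) *\<^sub>R k)"
    by (intro sum.cong) auto
  hence "u = (\<Sum>k\<in>V. (1/(N+1)) *\<^sub>R k)" using bs by simp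
  hence "u = (1/(N+1)) *\<^sub>R (\<Sum>k\<in>V. k)" by (simp add: scaleR_sum_right)
  hence "u $ i = (1/(N+1)) * (\<Sum>k\<in>V. k $ i)" for i by (simp add: sum_component)
  hence eqi: "1/2 = (1/(N+1)) * (\<Sum>k\<in>V. k $ i)" for i unfolding u_def by simp
  fix i :: 'n
  have "\<forall>k\<in>V. k $ i = 0 \<or> k $ i = 1" using Vc unfolding cube_vertices_def by auto
  hence "(\<Sum>k\<in>V. k $ i) = real (card {k\<in>V. k $ i = 1})" by (rule sum_01_real[OF fin])
  with eqi[of i] have "N + 1 = 2 * real (card {k\<in>V. k $ i = 1})" using Npos by (simp add: field_simps)
  hence "CARD('n) + 1 = 2 * card {k\<in>V. k $ i = 1}" unfolding N_def by linarith
  with assms show False by presburger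
qed

end
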